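(* Let $X \subset \mathbb{R}^n$ be finite with at least $k+1$ points. Every element $(s,[x])$ of $\Gamma_{k}(X)$ has a unique largest branch point below it, i.e. there is a branch point $(s_{0},[x_{0}]) \leq (s,[x])$ such that every branch point $(t,[y]) \leq (s,[x])$ satisfies $(t,[y]) \leq (s_{0},[x_{0}])$.
   Context: $\mathbb{R}^n$ has Euclidean metric $d$. For $s\ge 0$, $V_s(X)$ is the Vietoris–Rips complex (vertex set $X$, simplices nonempty subsets with pairwise distances $\le s$), and for an integer $k\ge 0$, $L_{s,k}(X)$ is the full subcomplex of $V_s(X)$ on the vertices $x$ having at least $k$ points $x'\ne x$ of $X$ with $d(x,x')\le s$. $\Gamma_{k}(X)$ is the poset whose elements are pairs $(s,[x])$ with $s \in \mathbb{R}_{\geq 0}$ and $[x] \in \pi_{0}L_{s,k}(X)$, with $(s,[x]) \leq (t,[y])$ iff $s \leq t$ and the function $\pi_{0}L_{s,k}(X) \to \pi_{0}L_{t,k}(X)$ induced by inclusion sends $[x]$ to $[y]$. An element $(t,[x])$ of $\Gamma_{k}(X)$ is a branch point if either (1) there is $s_{0} < t$ such that for all $s$ with $s_{0} \leq s < t$ there are two distinct elements $(s,[x_{0}]) \neq (s,[x_{1}])$ with $(s,[x_{0}]) \leq (t,[x])$ and $(s,[x_{1}]) \leq (t,[x])$; or (2) there is no element $(s,[y])$ with $s<t$ and $(s,[y]) \leq (t,[x])$. *)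

theory Defs
  imports "HOL-Analysis.Analysis"
begin

definition Lverts :: "('a::metric_space) set \<Rightarrow> nat \<Rightarrow> real \<Rightarrow> 'a set" where
  "Lverts X k s = {x \<in> X. k \<le> card {x' \<in> X. x' \<noteq> x \<and> dist x x' \<le> s}}"

text \<open>Edges (1-simplices) of the full subcomplex L_{s,k}(X) of the Vietoris--Rips complex V_s(X).\<close>
definition Ledge :: "('a::metric_space) set \<Rightarrow> nat \<Rightarrow> real \<Rightarrow> 'a \<Rightarrow> 'a \<Rightarrow> bool" where
  "Ledge X k s x y \<longleftrightarrow> x \<in> Lverts X k s \<and> y \<in> Lverts X k s \<and> dist x y \<le> s"

text \<open>The path component [x] of a vertex x in L_{s,k}(X) (components of a simplicial
  complex are those of its 1-skeleton).\<close>
definition comp :: "('a::metric_space) set \<Rightarrow> nat \<Rightarrow> real \<Rightarrow> 'a \<Rightarrow> 'a set" where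
  "comp X k s x = {y. (Ledge X k s)\<^sup>*\<^sup>* x y}"

definition pi0 :: "('a::metric_space) set \<Rightarrow> nat \<Rightarrow> real \<Rightarrow> 'a set set" where
  "pi0 X k s = comp X k s ` Lverts X k s"

definition Gamma :: "('a::metric_space) set \<Rightarrow> nat \<Rightarrow> (real \<times> 'a set) set" where
  "Gamma X k = {(s, C). 0 \<le> s \<and> C \<in> pi0 X k s}"

text \<open>(s,C) \<le> (t,D): s \<le> t and the map pi0 L_s \<rightarrow> pi0 L_t induced by inclusion sends C to D.\<close>
definition gamma_le :: "('a::metric_space) set \<Rightarrow> nat \<Rightarrow> real \<times> 'a set \<Rightarrow> real \<times> 'a set \<Rightarrow> bool" where
  "gamma_le X k p q \<longleftrightarrow> p \<in> Gamma X k \<and> q \<in> Gamma X k \<and> fst p \<le> fst q \<and>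
     (\<forall>x \<in> snd p. comp X k (fst q) x = snd q)"

definition branch_point :: "('a::metric_space) set \<Rightarrow> nat \<Rightarrow> real \<times> 'a set \<Rightarrow> bool" where
  "branch_point X k p \<longleftrightarrow> p \<in> Gamma X k \<and>
     ((\<exists>s0 < fst p. \<forall>s. s0 \<le> s \<and> s < fst p \<longrightarrow>
         (\<exists>C0 C1. C0 \<noteq> C1 \<and> gamma_le X k (s, C0) p \<and> gamma_le X k (s, C1) p))
      \<or> \<not> (\<exists>s C. s < fst p \<and> gamma_le X k (s, C) p))"

end

theory Submission
  imports Defs
begin

lemma Lverts_sub: "Lverts X k s \<subseteq> X"
  unfolding Lverts_def by auto

lemma Lverts_mono:
  assumes "finite X" "s \<le> t" shows "Lverts X k s \<subseteq> Lverts X k t"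
proof
  fix x assume x: "x \<in> Lverts X k s"
  have "card {x' \<in> X. x' \<noteq> x \<and> dist x x' \<le> s} \<le> card {x' \<in> X. x' \<noteq> x \<and> dist x x' \<le> t}"
    by (rule card_mono) (use assms in auto)
  with x show "x \<in> Lverts X k t" unfolding Lverts_def by auto
qed

lemma Ledge_mono:
  "finite X \<Longrightarrow> s \<le> t \<Longrightarrow> Ledge X k s x y \<Longrightarrow> Ledge X k t x y"
  unfolding Ledge_def using Lverts_mono by fastforce

lemma comp_mono:
  assumes "finite X" "s \<le> t" shows "comp X k s x \<subseteq> comp X k t x"
  unfolding comp_def using mono_rtranclp[of "Ledge X k s" "Ledge X k t"] Ledge_mono[OF assms]
  by blast

lemma comp_self: "x \<in> comp X k s x"
  unfolding comp_def by auto

lemma Ledge_sym: "Ledge X k s x y \<Longrightarrow> Ledge X k s y x"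
  unfolding Ledge_def by (auto simp: dist_commute)

lemma rt_sym: "(Ledge X k s)\<^sup>*\<^sup>* x y \<Longrightarrow> (Ledge X k s)\<^sup>*\<^sup>* y x"
proof (induction rule: rtranclp_induct)
  case base then show ?case by simp
next
  case (step y z)
  then show ?case using Ledge_sym converse_rtranclp_into_rtranclp by metis
qed

lemma comp_eq: "y \<in> comp X k s x \<Longrightarrow> comp X k s y = comp X k s x"
  unfolding comp_def using rt_sym rtranclp_trans by (metis (mono_tags, lifting) mem_Collect_eq Collect_cong)

lemma gamma_trans: "gamma_le X k p q \<Longrightarrow> gamma_le X k q r \<Longrightarrow> gamma_le X k p r"
  unfolding gamma_le_def
proof (elim conjE, intro conjI ballI)
  fix x assume "x \<in> snd p" "\<forall>x\<in>snd p. comp X k (fst q) x = snd q"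
    "\<forall>x\<in>snd q. comp X k (fst r) x = snd r"
  then show "comp X k (fst r) x = snd r" using comp_self by metis
qed auto

lemma Gamma_D: "(t, D) \<in> Gamma X k \<Longrightarrow> \<exists>v \<in> Lverts X k t. D = comp X k t v"
  unfolding Gamma_def pi0_def by auto

lemma Gamma_ne: "(t, D) \<in> Gamma X k \<Longrightarrow> \<exists>v. v \<in> D"
  using Gamma_D comp_self by metis

lemma gamma_refl: "p \<in> Gamma X k \<Longrightarrow> gamma_le X k p p"
  unfolding gamma_le_def using Gamma_D comp_eq
  by (metis prod.collapse order_refl)

lemma map_up:
  assumes "finite X" "(t, D) \<in> Gamma X k" "t \<le> t'"
  shows "\<exists>D'. gamma_le X k (t, D) (t', D')"
proof -
  obtain v where v: "v \<in> Lverts X k t" "D = comp X k t v" using Gamma_D[OF assms(2)] by blast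
  have v': "v \<in> Lverts X k t'" using Lverts_mono[OF assms(1,3)] v by auto
  have "(t', comp X k t' v) \<in> Gamma X k"
    using v' assms unfolding Gamma_def pi0_def by auto
  moreover have "\<forall>x \<in> D. comp X k t' x = comp X k t' v"
    using v comp_mono[OF assms(1,3)] comp_eq by blast
  ultimately show ?thesis using assms unfolding gamma_le_def by auto
qed

lemma up_unique:
  "gamma_le X k (t, D) (t', D1) \<Longrightarrow> gamma_le X k (t, D) (t', D2) \<Longrightarrow> D1 = D2"
  unfolding gamma_le_def using Gamma_ne by fastforce

lemma factor:
  assumes "finite X" "gamma_le X k (t, D) (t', D')" "gamma_le X k (t, D) (s, C)" "t' \<le> s"
  shows "gamma_le X k (t', D') (s, C)"
proof -
  obtain v where v: "v \<in> D" using assms(2) Gamma_ne unfolding gamma_le_def by blast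
  have 1: "comp X k t' v = D'" "comp X k s v = C" using assms(2,3) v unfolding gamma_le_def by auto
  have "\<forall>y \<in> D'. comp X k s y = C"
    using 1 comp_mono[OF assms(1,4)] comp_eq by blast
  then show ?thesis using assms(2,3,4) unfolding gamma_le_def by auto
qed

lemma const_pi0:
  assumes "a \<le> b" "\<forall>x\<in>X. \<forall>y\<in>X. \<not> (a < dist x y \<and> dist x y \<le> b)"
  shows "comp X k a = comp X k b" "pi0 X k a = pi0 X k b"
proof -
  have d: "\<And>x y. x \<in> X \<Longrightarrow> y \<in> X \<Longrightarrow> dist x y \<le> a \<longleftrightarrow> dist x y \<le> b"
    using assms by force
  have "Lverts X k a = Lverts X k b"
    unfolding Lverts_def
  proof (intro Collect_cong conj_cong refl)
    fix x assume "x \<in> X"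
    then have "{x' \<in> X. x' \<noteq> x \<and> dist x x' \<le> a} = {x' \<in> X. x' \<noteq> x \<and> dist x x' \<le> b}"
      using d by auto
    then show "(k \<le> card {x' \<in> X. x' \<noteq> x \<and> dist x x' \<le> a}) = (k \<le> card {x' \<in> X. x' \<noteq> x \<and> dist x x' \<le> b})"
      by simp
  qed
  moreover have "Ledge X k a = Ledge X k b"
    using calculation Lverts_sub d unfolding Ledge_def by (intro ext) blast
  ultimately show "comp X k a = comp X k b" "pi0 X k a = pi0 X k b"
    unfolding comp_def pi0_def by auto
qed

lemma gamma_transfer:
  assumes "pi0 X k t = pi0 X k t'" "0 \<le> t" "0 \<le> t'" "t \<le> fst q" "t' \<le> fst q"
  shows "gamma_le X k (t, D) q = gamma_le X k (t', D) q"
  using assms unfolding gamma_le_def Gamma_def by auto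

theorem lemma11:
  fixes X :: "(real ^ 'n) set" and k :: nat and s :: real and C :: "(real ^ 'n) set"
  assumes "finite X" and "k + 1 \<le> card X" and "(s, C) \<in> Gamma X k"
  shows "\<exists>s0 C0. branch_point X k (s0, C0) \<and> gamma_le X k (s0, C0) (s, C) \<and>
           (\<forall>t D. branch_point X k (t, D) \<and> gamma_le X k (t, D) (s, C)
                   \<longrightarrow> gamma_le X k (t, D) (s0, C0))"
proof -
  note fin = assms(1)
  define U where "U t \<longleftrightarrow> (\<exists>!D. gamma_le X k (t, D) (s, C))" for t
  define dists where "dists = (\<lambda>(x,y). dist x y) ` (X \<times> X)"
  have fd: "finite dists" unfolding dists_def using fin by auto
  define T where "T = {t \<in> {0, s} \<union> dists. 0 \<le> t \<and> t \<le> s \<and> (\<forall>t'. t \<le> t' \<and> t' \<le> s \<longrightarrow> U t')}"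
  have s0': "0 \<le> s" using assms(3) unfolding Gamma_def by auto
  have Us: "U s"
    unfolding U_def
  proof
    show "gamma_le X k (s, C) (s, C)" using gamma_refl assms(3) by blast
  next
    fix D assume h: "gamma_le X k (s, D) (s, C)"
    then have "(s, D) \<in> Gamma X k" unfolding gamma_le_def by simp
    then have "gamma_le X k (s, D) (s, D)" by (rule gamma_refl)
    then show "D = C" using up_unique h by metis
  qed
  have sT: "s \<in> T" unfolding T_def using s0' Us by auto
  have fT: "finite T"
    by (rule finite_subset[of _ "{0, s} \<union> dists"]) (use fd in \<open>auto simp: T_def\<close>)
  define s0 where "s0 = Min T"
  have s0T: "s0 \<in> T" unfolding s0_def using fT sT Min_in by blast
  have s0min: "\<And>t. t \<in> T \<Longrightarrow> s0 \<le> t" unfolding s0_def using fT by simp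
  have s0ge: "0 \<le> s0" "s0 \<le> s" and Uabove: "\<And>t'. s0 \<le> t' \<Longrightarrow> t' \<le> s \<Longrightarrow> U t'"
    using s0T unfolding T_def by auto
  obtain D0 where D0: "gamma_le X k (s0, D0) (s, C)"
    and D0u: "\<And>D. gamma_le X k (s0, D) (s, C) \<Longrightarrow> D = D0"
    using Uabove[OF order_refl s0ge(2)] unfolding U_def by blast
  have D0G: "(s0, D0) \<in> Gamma X k" using D0 unfolding gamma_le_def by auto
  have equiv: "gamma_le X k (t, D) (s0, D0) \<longleftrightarrow> gamma_le X k (t, D) (s, C)" if ts0: "t \<le> s0" for t D
  proof
    assume "gamma_le X k (t, D) (s0, D0)" then show "gamma_le X k (t, D) (s, C)"
      using D0 gamma_trans by blast
  next
    assume h: "gamma_le X k (t, D) (s, C)"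
    then have "(t, D) \<in> Gamma X k" unfolding gamma_le_def by auto
    then obtain D' where D': "gamma_le X k (t, D) (s0, D')" using map_up[OF fin _ ts0] by blast
    then have "gamma_le X k (s0, D') (s, C)" using factor[OF fin D' h s0ge(2)] by simp
    then have "D' = D0" using D0u by blast
    then show "gamma_le X k (t, D) (s0, D0)" using D' by simp
  qed
  have bp: "branch_point X k (s0, D0)"
  proof (cases "s0 = 0")
    case True
    then show ?thesis unfolding branch_point_def using D0G
      unfolding gamma_le_def Gamma_def by auto
  next
    case False
    with s0ge have pos: "0 < s0" by simp
    define A where "A = {0} \<union> {d \<in> dists. d < s0}"
    have fA: "finite A" unfolding A_def using fd by auto
    define a where "a = Max A"
    have aA: "a \<in> A" unfolding a_def using fA Min_in
      by (metis A_def Max_in empty_not_insert insert_is_Un)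
    have a_ge: "\<And>d. d \<in> A \<Longrightarrow> d \<le> a" unfolding a_def using fA by simp
    have a0: "0 \<le> a" using a_ge A_def by auto
    have as0: "a < s0" using aA pos unfolding A_def by auto
    have aC: "a \<in> {0, s} \<union> dists" using aA unfolding A_def by auto
    have gap: "\<forall>x\<in>X. \<forall>y\<in>X. \<not> (a < dist x y \<and> dist x y \<le> t')" if "t' < s0" for t'
    proof (intro ballI notI)
      fix x y assume xy: "x \<in> X" "y \<in> X" "a < dist x y \<and> dist x y \<le> t'"
      then have "dist x y \<in> A" unfolding A_def dists_def using that by auto
      then show False using a_ge xy by force
    qed
    have pa: "pi0 X k t' = pi0 X k a" if "a \<le> t'" "t' < s0" for t'
      using const_pi0(2)[OF that(1) gap[OF that(2)]] by simp
    have tr: "gamma_le X k (t', D) (s0, D0) \<longleftrightarrow> gamma_le X k (a, D) (s0, D0)"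
      if "a \<le> t'" "t' < s0" for t' D
      using gamma_transfer[OF pa[OF that] _ a0, of "(s0, D0)" D] that a0 by auto
    show ?thesis
    proof (cases "\<exists>D'. gamma_le X k (a, D') (s0, D0)")
      case True
      then obtain D' where D': "gamma_le X k (a, D') (s0, D0)" by blast
      have notUa: "\<not> U a"
      proof
        assume Ua: "U a"
        have "U t'" if "a \<le> t'" "t' \<le> s" for t'
        proof (cases "t' < s0")
          case True
          have "gamma_le X k (t', D) (s, C) \<longleftrightarrow> gamma_le X k (a, D) (s, C)" for D
            using equiv[of t' D] equiv[of a D] tr[OF that(1) True, of D] True as0 by auto
          then show ?thesis using Ua unfolding U_def by simp
        next
          case False then show ?thesis using Uabove that by simp
        qed
        then have "a \<in> T" unfolding T_def using aC a0 as0 s0ge by auto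
        then show False using s0min as0 by force
      qed
      have "\<exists>C0 C1. C0 \<noteq> C1 \<and> gamma_le X k (t', C0) (s0, D0) \<and> gamma_le X k (t', C1) (s0, D0)"
        if "a \<le> t'" "t' < s0" for t'
      proof -
        have e: "gamma_le X k (t', D) (s0, D0) \<longleftrightarrow> gamma_le X k (a, D) (s, C)" for D
          using tr[OF that, of D] equiv[of a D] as0 by auto
        have "gamma_le X k (t', D') (s0, D0)" using e D' equiv[of a D'] as0 by auto
        moreover have "\<exists>D''. D'' \<noteq> D' \<and> gamma_le X k (a, D'') (s, C)"
          using notUa D' equiv[of a D'] as0 unfolding U_def by auto
        ultimately show ?thesis using e by blast
      qed
      then show ?thesis unfolding branch_point_def using D0G as0 by auto
    next
      case False
      have "\<not> (\<exists>s' C'. s' < s0 \<and> gamma_le X k (s', C') (s0, D0))"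
      proof
        assume "\<exists>s' C'. s' < s0 \<and> gamma_le X k (s', C') (s0, D0)"
        then obtain s' C' where h: "s' < s0" "gamma_le X k (s', C') (s0, D0)" by blast
        show False
        proof (cases "a \<le> s'")
          case True then show False using tr[OF True h(1)] h False by blast
        next
          case nt: False
          have hG: "(s', C') \<in> Gamma X k" using h unfolding gamma_le_def by auto
          then obtain D'' where D'': "gamma_le X k (s', C') (a, D'')"
            using map_up[OF fin hG, of a] nt by auto
          have "gamma_le X k (a, D'') (s0, D0)" using factor[OF fin D'' h(2)] as0 by simp
          then show False using False by blast
        qed
      qed
      then show ?thesis unfolding branch_point_def using D0G by auto
    qed
  qed
  have maxi: "gamma_le X k (t, D) (s0, D0)"
    if bt: "branch_point X k (t, D)" and le: "gamma_le X k (t, D) (s, C)" for t D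
  proof (cases "t \<le> s0")
    case True then show ?thesis using equiv le by blast
  next
    case False
    have ts: "t \<le> s" using le unfolding gamma_le_def by simp
    have st: "s0 \<le> t" using False by simp
    obtain D1 where D1: "gamma_le X k (s0, D0) (t, D1)" using map_up[OF fin D0G st] by blast
    have "gamma_le X k (t, D1) (s, C)" using factor[OF fin D1 D0 ts] .
    moreover have Ut: "U t" using Uabove[OF st ts] .
    ultimately have "D1 = D" using le unfolding U_def by blast
    with D1 have below: "gamma_le X k (s0, D0) (t, D)" by simp
    have n2: "\<not> (\<nexists>s' C'. s' < fst (t, D) \<and> gamma_le X k (s', C') (t, D))"
      using below False by (metis fst_conv not_le)
    have "\<exists>s1 < fst (t, D). \<forall>s'. s1 \<le> s' \<and> s' < fst (t, D) \<longrightarrow>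
         (\<exists>C0 C1. C0 \<noteq> C1 \<and> gamma_le X k (s', C0) (t, D) \<and> gamma_le X k (s', C1) (t, D))"
      using bt n2 unfolding branch_point_def by blast
    then obtain s1 where s1: "s1 < t" "\<And>s'. s1 \<le> s' \<Longrightarrow> s' < t \<Longrightarrow>
         (\<exists>C0 C1. C0 \<noteq> C1 \<and> gamma_le X k (s', C0) (t, D) \<and> gamma_le X k (s', C1) (t, D))"
      by auto
    define s' where "s' = max s1 s0"
    have s'1: "s1 \<le> s'" "s' < t" "s0 \<le> s'" "s' \<le> s"
      using s1(1) False ts unfolding s'_def by auto
    obtain C0 C1 where c: "C0 \<noteq> C1" "gamma_le X k (s', C0) (t, D)" "gamma_le X k (s', C1) (t, D)"
      using s1(2)[OF s'1(1,2)] by blast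
    have "U s'" using Uabove[OF s'1(3,4)] .
    moreover have "gamma_le X k (s', C0) (s, C)" "gamma_le X k (s', C1) (s, C)"
      using c gamma_trans[OF _ le] by blast+
    ultimately show ?thesis using c(1) unfolding U_def by blast
  qed
  show ?thesis using bp D0 maxi by blast
qed

end
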